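(* Let $\alpha\in(0,1)$, $m\ge1$, $a_0,\dots,a_{m-1}\in\mathbb{C}$, and let $\mathcal{S}$ be the set of solutions $x$ of $${}^LD^{m\circ\alpha}x(t)+a_{m-1}{}^LD^{(m-1)\circ\alpha}x(t)+\dots+a_1{}^LD^\alpha x(t)+a_0x(t)=0 .$$ Then $\mathcal{S}$ is a complex vector space of dimension $m$, and the map $x\mapsto(x(0),{}^LD^\alpha x(0),\dots,{}^LD^{(m-1)\circ\alpha}x(0))$ is an isomorphism $\mathcal{S}\to\mathbb{C}^m$.
   Context: Solutions are taken among functions $x:[0,\infty)\to\mathbb{C}$ given by power series $\sum_nx_nt^n$ convergent for all $t\ge0$, the equation holding for every $t\ge0$. L-fractional derivative: ${}^LD^\alpha x(t)=\frac{\Gamma(2-\alpha)}{t^{1-\alpha}}\cdot\frac{1}{\Gamma(1-\alpha)}\int_0^t (t-\tau)^{-\alpha}x'(\tau)d\tau$ for $t>0$; on such power series it acts termwise, ${}^LD^\alpha\sum_nx_nt^n=\sum_nx_{n+1}\frac{\Gamma(n+2)\Gamma(2-\alpha)}{\Gamma(n+2-\alpha)}t^n$, which also defines its value at $t=0$. ${}^LD^{k\circ\alpha}$ is the $k$-fold composition of ${}^LD^\alpha$. *)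

theory Defs
  imports "HOL-Analysis.Analysis" "HOL-Library.Function_Algebras"
begin

text \<open>A solution is represented by its coefficient sequence c, x(t) = sum of c n * t^n, t \<ge> 0.\<close>

definition ps_eval :: "(nat \<Rightarrow> complex) \<Rightarrow> real \<Rightarrow> complex" where
  "ps_eval c t = (\<Sum>n. c n * complex_of_real t ^ n)"

definition entire_ps :: "(nat \<Rightarrow> complex) \<Rightarrow> bool" where
  "entire_ps c \<longleftrightarrow> (\<forall>t::real. t \<ge> 0 \<longrightarrow> summable (\<lambda>n. c n * complex_of_real t ^ n))"

text \<open>L-fractional derivative acting termwise on coefficient sequences.\<close>
definition LD :: "real \<Rightarrow> (nat \<Rightarrow> complex) \<Rightarrow> (nat \<Rightarrow> complex)" where
  "LD \<alpha> c = (\<lambda>n. c (Suc n) *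
      complex_of_real (Gamma (real n + 2) * Gamma (2 - \<alpha>) / Gamma (real n + 2 - \<alpha>)))"

definition cscale :: "complex \<Rightarrow> (nat \<Rightarrow> complex) \<Rightarrow> (nat \<Rightarrow> complex)" where
  "cscale z x = (\<lambda>n. z * x n)"

end

theory Submission
  imports Defs
begin

definition wf :: "real \<Rightarrow> nat \<Rightarrow> real" where
  "wf \<alpha> j = Gamma (real j + 2) * Gamma (2 - \<alpha>) / Gamma (real j + 2 - \<alpha>)"

lemma LD_wf: "LD \<alpha> c = (\<lambda>n. c (Suc n) * of_real (wf \<alpha> n))"
  unfolding LD_def wf_def by simp

lemma wf_0: assumes "\<alpha> < 1" shows "wf \<alpha> 0 = 1"
proof -
  have "Gamma (2 - \<alpha>) > 0" using assms by simp
  moreover have "Gamma (2::real) = 1" using Gamma_numeral[of "Num.Bit0 Num.One"] by simp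
  ultimately show ?thesis unfolding wf_def by simp
qed

lemma wf_Suc: assumes "\<alpha> < 1"
  shows "wf \<alpha> (Suc j) = wf \<alpha> j * ((real j + 2) / (real j + 2 - \<alpha>))"
proof -
  have np: "real j + 2 \<notin> \<int>\<^sub>\<le>\<^sub>0" "real j + 2 - \<alpha> \<notin> \<int>\<^sub>\<le>\<^sub>0"
    using assms by (auto simp: nonpos_Ints_def)
  have g1: "Gamma (real (Suc j) + 2) = (real j + 2) * Gamma (real j + 2)"
    using Gamma_plus1[OF np(1)] by (simp add: add_ac)
  have g2: "Gamma (real (Suc j) + 2 - \<alpha>) = (real j + 2 - \<alpha>) * Gamma (real j + 2 - \<alpha>)"
    using Gamma_plus1[OF np(2)] by (simp add: algebra_simps)
  have "Gamma (real j + 2 - \<alpha>) > 0" "real j + 2 - \<alpha> > 0" using assms by auto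
  then show ?thesis unfolding wf_def g1 g2 by (simp add: field_simps)
qed

lemma wf_ge1: assumes "0 < \<alpha>" "\<alpha> < 1" shows "wf \<alpha> j \<ge> 1"
proof (induction j)
  case 0 then show ?case using wf_0 assms by simp
next
  case (Suc j)
  have "(real j + 2) / (real j + 2 - \<alpha>) \<ge> 1" using assms by simp
  then have "1 * 1 \<le> wf \<alpha> j * ((real j + 2) / (real j + 2 - \<alpha>))"
    using Suc by (intro mult_mono) auto
  then show ?case using wf_Suc[OF assms(2)] by simp
qed

lemma wf_harm: assumes "0 < \<alpha>" "\<alpha> < 1" shows "wf \<alpha> j \<ge> \<alpha> * harm (Suc j)"
proof (induction j)
  case 0 then show ?case using wf_0 assms by (simp add: harm_def)
next
  case (Suc j)
  have w1: "wf \<alpha> j \<ge> 1" using wf_ge1 assms by blast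
  have pos: "real j + 2 - \<alpha> > 0" using assms by simp
  have "wf \<alpha> (Suc j) = wf \<alpha> j + wf \<alpha> j * (\<alpha> / (real j + 2 - \<alpha>))"
    using wf_Suc[OF assms(2)] pos by (simp add: field_simps)
  also have "wf \<alpha> j * (\<alpha> / (real j + 2 - \<alpha>)) \<ge> \<alpha> / (real j + 2)"
  proof -
    have "\<alpha> / (real j + 2) \<le> \<alpha> / (real j + 2 - \<alpha>)"
      using assms pos by (intro divide_left_mono) auto
    also have "\<dots> = 1 * (\<alpha> / (real j + 2 - \<alpha>))" by simp
    also have "\<dots> \<le> wf \<alpha> j * (\<alpha> / (real j + 2 - \<alpha>))"
      using w1 assms pos by (intro mult_right_mono) auto
    finally show ?thesis .
  qed
  then have "wf \<alpha> j + wf \<alpha> j * (\<alpha> / (real j + 2 - \<alpha>)) \<ge> \<alpha> * harm (Suc j) + \<alpha> / (real j + 2)"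
    using Suc by linarith
  moreover have "\<alpha> * harm (Suc (Suc j)) = \<alpha> * harm (Suc j) + \<alpha> / (real j + 2)"
    by (simp add: harm_Suc field_simps)
  ultimately show ?case by simp
qed

lemma wf_le: assumes "0 < \<alpha>" "\<alpha> < 1" shows "wf \<alpha> j \<le> real j + 1"
proof (induction j)
  case 0 then show ?case using wf_0 assms by simp
next
  case (Suc j)
  have pos: "real j + 2 - \<alpha> > 0" using assms by simp
  have "wf \<alpha> (Suc j) \<le> (real j + 1) * ((real j + 2) / (real j + 2 - \<alpha>))"
  proof -
    have "wf \<alpha> j * (real j + 2) \<le> (real j + 1) * (real j + 2)"
      using Suc by (intro mult_right_mono) auto
    then show ?thesis using wf_Suc[OF assms(2)] pos by (simp add: divide_right_mono)
  qed
  also have "\<dots> \<le> real j + 2"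
  proof -
    have "(real j + 1) * (real j + 2) \<le> (real j + 2 - \<alpha>) * (real j + 2)"
      using assms by (intro mult_right_mono) auto
    then show ?thesis using pos by (simp add: pos_divide_le_eq mult.commute)
  qed
  finally show ?case by simp
qed

lemma wf_at_top: assumes "0 < \<alpha>" "\<alpha> < 1" shows "eventually (\<lambda>n. wf \<alpha> n \<ge> B) sequentially"
proof -
  have "filterlim (\<lambda>n. harm (Suc n) :: real) at_top sequentially"
    using harm_at_top filterlim_sequentially_Suc by blast
  then have "filterlim (\<lambda>n. \<alpha> * harm (Suc n) :: real) at_top sequentially"
    using assms(1) by (simp add: filterlim_tendsto_pos_mult_at_top[OF tendsto_const])
  then have "eventually (\<lambda>n. \<alpha> * harm (Suc n) \<ge> B) sequentially"
    by (simp add: filterlim_at_top)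
  then show ?thesis by eventually_elim (use wf_harm[OF assms] in \<open>auto intro: order.trans\<close>)
qed


definition Pw :: "real \<Rightarrow> nat \<Rightarrow> nat \<Rightarrow> real" where
  "Pw \<alpha> n k = (\<Prod>i<k. wf \<alpha> (n + i))"

lemma LD_pow: "(LD \<alpha> ^^ k) c n = c (n + k) * of_real (Pw \<alpha> n k)"
proof (induction k arbitrary: n)
  case 0 then show ?case by (simp add: Pw_def)
next
  case (Suc k)
  have "(LD \<alpha> ^^ Suc k) c n = (LD \<alpha> ^^ k) c (Suc n) * of_real (wf \<alpha> n)"
    by (simp add: LD_wf)
  also have "\<dots> = c (n + Suc k) * of_real (Pw \<alpha> (Suc n) k * wf \<alpha> n)"
    using Suc by simp
  also have "Pw \<alpha> (Suc n) k * wf \<alpha> n = Pw \<alpha> n (Suc k)"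
    unfolding Pw_def by (simp del: prod.lessThan_Suc add: prod.lessThan_Suc_shift mult.commute)
  finally show ?case .
qed

lemma Pw_ge1: assumes "0 < \<alpha>" "\<alpha> < 1" shows "Pw \<alpha> n k \<ge> 1"
  unfolding Pw_def using wf_ge1[OF assms] by (intro prod_ge_1) auto

lemma wf_nonneg: assumes "0 < \<alpha>" "\<alpha> < 1" shows "wf \<alpha> j \<ge> 0"
  using wf_ge1[OF assms, of j] by linarith

lemma Pw_nonneg: assumes "0 < \<alpha>" "\<alpha> < 1" shows "Pw \<alpha> n k \<ge> 0"
  using Pw_ge1[OF assms, of n k] by linarith

lemma Pw_mono: assumes "0 < \<alpha>" "\<alpha> < 1" "k \<le> m" shows "Pw \<alpha> n k \<le> Pw \<alpha> n m"
  using assms(3)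
proof (induction m)
  case 0 then show ?case by simp
next
  case (Suc m)
  show ?case
  proof (cases "k = Suc m")
    case True then show ?thesis by simp
  next
    case False
    then have "Pw \<alpha> n k \<le> Pw \<alpha> n m" using Suc by simp
    also have "\<dots> = Pw \<alpha> n m * 1" by simp
    also have "\<dots> \<le> Pw \<alpha> n m * wf \<alpha> (n + m)"
      using wf_ge1[OF assms(1,2), of "n+m"] Pw_nonneg[OF assms(1,2), of n m]
      by (intro mult_left_mono) simp_all
    also have "\<dots> = Pw \<alpha> n (Suc m)" by (simp add: Pw_def)
    finally show ?thesis .
  qed
qed

lemma Pw_split: assumes "0 < \<alpha>" "\<alpha> < 1" "k < m"
  shows "Pw \<alpha> n k * wf \<alpha> (n + (m - 1)) \<le> Pw \<alpha> n m"
proof -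
  obtain m' where m: "m = Suc m'" using assms(3) by (cases m) auto
  have "Pw \<alpha> n k * wf \<alpha> (n + m') \<le> Pw \<alpha> n m' * wf \<alpha> (n + m')"
    using Pw_mono[OF assms(1,2), of k m' n] assms(3) m wf_nonneg[OF assms(1,2), of "n+m'"]
    by (intro mult_right_mono) simp_all
  then show ?thesis using m by (simp add: Pw_def)
qed

lemma ps_eval_0: "ps_eval d 0 = d 0"
  unfolding ps_eval_def by simp

lemma entire_normI:
  assumes "entire_ps c"
  shows "summable (\<lambda>n. norm (c n * z ^ n))"
proof -
  have "norm z + 1 \<ge> 0" by simp
  then have "summable (\<lambda>n. c n * complex_of_real (norm z + 1) ^ n)"
    using assms unfolding entire_ps_def by blast
  moreover have "norm z < norm (complex_of_real (norm z + 1))"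
    unfolding norm_of_real by simp
  ultimately show ?thesis by (rule powser_insidea)
qed

lemma entire_allI:
  assumes "entire_ps c"
  shows "summable (\<lambda>n. c n * z ^ n)"
  by (rule summable_norm_cancel[OF entire_normI[OF assms]])

lemma entire_LD:
  assumes "0 < \<alpha>" "\<alpha> < 1" "entire_ps c"
  shows "entire_ps (LD \<alpha> c)"
  unfolding entire_ps_def
proof (intro allI impI)
  fix t :: real assume "t \<ge> 0"
  have s: "summable (\<lambda>n. diffs c n * complex_of_real (t + 1) ^ n)"
  proof (rule termdiff_converges[where K = "t + 2"])
    show "norm (complex_of_real (t + 1)) < t + 2" unfolding norm_of_real using \<open>t \<ge> 0\<close> by simp
  qed (rule entire_allI[OF assms(3)])
  have "norm (complex_of_real t) < norm (complex_of_real (t + 1))"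
    unfolding norm_of_real using \<open>t \<ge> 0\<close> by simp
  then have sn: "summable (\<lambda>n. norm (diffs c n * complex_of_real t ^ n))"
    by (rule powser_insidea[OF s])
  show "summable (\<lambda>n. LD \<alpha> c n * complex_of_real t ^ n)"
  proof (rule summable_comparison_test[OF _ sn], intro exI allI impI)
    fix n :: nat
    have "norm (LD \<alpha> c n * complex_of_real t ^ n) = norm (c (Suc n)) * wf \<alpha> n * norm (complex_of_real t ^ n)"
      using wf_ge1[OF assms(1,2), of n] by (simp add: LD_wf norm_mult)
    also have "\<dots> \<le> norm (c (Suc n)) * (real n + 1) * norm (complex_of_real t ^ n)"
      using wf_le[OF assms(1,2), of n] by (intro mult_right_mono mult_left_mono) auto
    also have "\<dots> = norm (diffs c n * complex_of_real t ^ n)"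
    proof -
      have "norm (of_nat (Suc n) :: complex) = real n + 1" by (simp only: norm_of_nat)
      then show ?thesis by (simp add: diffs_def norm_mult del: of_nat_Suc)
    qed
    finally show "norm (LD \<alpha> c n * complex_of_real t ^ n) \<le> norm (diffs c n * complex_of_real t ^ n)" .
  qed
qed

lemma entire_LD_pow:
  assumes "0 < \<alpha>" "\<alpha> < 1" "entire_ps c"
  shows "entire_ps ((LD \<alpha> ^^ k) c)"
  by (induction k) (use assms entire_LD in auto)


lemma ps_zero:
  assumes ent: "entire_ps e" and z: "\<forall>t\<ge>0. ps_eval e t = 0"
  shows "e n = 0"
proof (induction n rule: less_induct)
  case (less n)
  define g where "g z = (\<Sum>j. e (j + n) * z ^ j)" for z :: complex
  have sm: "(\<lambda>j. e (j + n) * z ^ j) sums g z" for z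
  proof (cases "z = 0")
    case True
    then show ?thesis unfolding g_def using powser_sums_zero[of "\<lambda>j. e (j + n)"]
      by (simp add: sums_iff)
  next
    case False
    have "summable (\<lambda>j. e (j + n) * z ^ (j + n))"
      using summable_ignore_initial_segment[OF entire_allI[OF ent, of z], of n] by simp
    then have "summable (\<lambda>j. inverse (z ^ n) * (e (j + n) * z ^ (j + n)))"
      by (rule summable_mult)
    moreover have "inverse (z ^ n) * (e (j + n) * z ^ (j + n)) = e (j + n) * z ^ j" for j
      using False by (simp add: power_add field_simps)
    ultimately show ?thesis unfolding g_def by (simp add: summable_sums)
  qed
  have lim: "(g \<longlongrightarrow> e n) (at 0)"
    using powser_limit_0[of 1 "\<lambda>j. e (j + n)" g] sm by simp
  have g0: "g (of_real t) = 0" if t: "t > 0" for t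
  proof -
    have "(\<lambda>j. e j * complex_of_real t ^ j) sums 0"
      using ent z t unfolding entire_ps_def ps_eval_def
      by (metis less_imp_le summable_sums)
    from sums_split_initial_segment[OF this, of n]
    have "(\<lambda>j. e (j + n) * complex_of_real t ^ (j + n)) sums 0"
      using less by simp
    then have "(\<lambda>j. inverse (complex_of_real t ^ n) * (e (j + n) * complex_of_real t ^ (j + n))) sums 0"
      using sums_mult[of _ 0 "inverse (complex_of_real t ^ n)"] by simp
    moreover have "inverse (complex_of_real t ^ n) * (e (j + n) * complex_of_real t ^ (j + n))
        = e (j + n) * complex_of_real t ^ j" for j
      using t by (simp add: power_add field_simps)
    ultimately have "(\<lambda>j. e (j + n) * complex_of_real t ^ j) sums 0" by simp
    then show ?thesis using sm sums_unique2 by blast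
  qed
  define x where "x k = complex_of_real (inverse (real (Suc k)))" for k
  have "x \<longlonglongrightarrow> complex_of_real 0"
    unfolding x_def by (intro tendsto_of_real LIMSEQ_inverse_real_of_nat)
  moreover have "x k \<noteq> 0" for k
    unfolding x_def of_real_eq_0_iff by simp
  ultimately have "filterlim x (at 0) sequentially"
    by (intro filterlim_atI) (auto intro: always_eventually)
  from filterlim_compose[OF lim this]
  have "(\<lambda>k. g (x k)) \<longlonglongrightarrow> e n" .
  moreover have "g (x k) = 0" for k unfolding x_def by (rule g0) simp
  ultimately show ?case by (simp add: LIMSEQ_const_iff)
qed

definition RE :: "real \<Rightarrow> nat \<Rightarrow> (nat \<Rightarrow> complex) \<Rightarrow> (nat \<Rightarrow> complex) \<Rightarrow> nat \<Rightarrow> complex" where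
  "RE \<alpha> m a c n = (LD \<alpha> ^^ m) c n + (\<Sum>k<m. a k * (LD \<alpha> ^^ k) c n)"

lemma ps_eval_comb:
  assumes "0 < \<alpha>" "\<alpha> < 1" "entire_ps c" "t \<ge> 0"
  shows "ps_eval ((LD \<alpha> ^^ m) c) t + (\<Sum>k<m. a k * ps_eval ((LD \<alpha> ^^ k) c) t)
       = ps_eval (RE \<alpha> m a c) t"
proof -
  have s: "(\<lambda>n. (LD \<alpha> ^^ k) c n * complex_of_real t ^ n) sums ps_eval ((LD \<alpha> ^^ k) c) t" for k
    using entire_LD_pow[OF assms(1-3), of k] assms(4) unfolding entire_ps_def ps_eval_def
    by (simp add: summable_sums)
  have "(\<lambda>n. (LD \<alpha> ^^ m) c n * complex_of_real t ^ n + (\<Sum>k<m. a k * ((LD \<alpha> ^^ k) c n * complex_of_real t ^ n)))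
      sums (ps_eval ((LD \<alpha> ^^ m) c) t + (\<Sum>k<m. a k * ps_eval ((LD \<alpha> ^^ k) c) t))"
    by (intro sums_add sums_sum sums_mult s)
  moreover have "(LD \<alpha> ^^ m) c n * complex_of_real t ^ n + (\<Sum>k<m. a k * ((LD \<alpha> ^^ k) c n * complex_of_real t ^ n))
      = RE \<alpha> m a c n * complex_of_real t ^ n" for n
    unfolding RE_def by (simp add: distrib_right sum_distrib_right mult.assoc)
  ultimately show ?thesis unfolding ps_eval_def by (simp add: sums_iff)
qed


lemma RE_alt: "RE \<alpha> m a c n = c (n + m) * of_real (Pw \<alpha> n m) + (\<Sum>k<m. a k * (c (n + k) * of_real (Pw \<alpha> n k)))"
  unfolding RE_def LD_pow by simp

lemma rec_bound:
  assumes "0 < \<alpha>" "\<alpha> < 1" "m \<ge> 1" "RE \<alpha> m a c n = 0"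
  shows "norm (c (n + m)) * wf \<alpha> (n + (m - 1)) \<le> (\<Sum>k<m. norm (a k) * norm (c (n + k)))"
proof -
  define W where "W = wf \<alpha> (n + (m - 1))"
  define Q where "Q = Pw \<alpha> n m"
  have W: "W > 0" unfolding W_def using wf_ge1[OF assms(1,2)] by (simp add: less_le_trans[OF zero_less_one])
  have Q: "Q > 0" unfolding Q_def using Pw_ge1[OF assms(1,2)] by (simp add: less_le_trans[OF zero_less_one])
  have eq: "c (n + m) * of_real Q = - (\<Sum>k<m. a k * (c (n + k) * of_real (Pw \<alpha> n k)))"
    using assms(4) unfolding RE_alt Q_def by (simp add: eq_neg_iff_add_eq_0)
  have "norm (c (n + m)) * Q = norm (c (n + m) * of_real Q)"
    using Q by (simp add: norm_mult)
  also have "\<dots> \<le> (\<Sum>k<m. norm (a k * (c (n + k) * of_real (Pw \<alpha> n k))))"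
    unfolding eq norm_minus_cancel by (rule norm_sum)
  also have "\<dots> = (\<Sum>k<m. norm (a k) * norm (c (n + k)) * Pw \<alpha> n k)"
    using Pw_nonneg[OF assms(1,2)] by (simp add: norm_mult mult.assoc)
  finally have 1: "norm (c (n + m)) * Q * W \<le> (\<Sum>k<m. norm (a k) * norm (c (n + k)) * Pw \<alpha> n k) * W"
    using W by (simp add: mult_right_mono)
  also have "\<dots> = (\<Sum>k<m. norm (a k) * norm (c (n + k)) * (Pw \<alpha> n k * W))"
    by (simp add: sum_distrib_right mult.assoc)
  also have "\<dots> \<le> (\<Sum>k<m. norm (a k) * norm (c (n + k)) * Q)"
    unfolding W_def Q_def
    by (intro sum_mono mult_left_mono Pw_split[OF assms(1,2)]) auto
  also have "\<dots> = (\<Sum>k<m. norm (a k) * norm (c (n + k))) * Q"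
    by (simp add: sum_distrib_right)
  finally have "(norm (c (n + m)) * W) * Q \<le> (\<Sum>k<m. norm (a k) * norm (c (n + k))) * Q"
    by (simp add: mult_ac)
  then show ?thesis using Q unfolding W_def by simp
qed

lemma rec_growth:
  assumes "0 < \<alpha>" "\<alpha> < 1" "m \<ge> 1" "\<forall>n. RE \<alpha> m a c n = 0" "r \<ge> 1"
  shows "\<exists>K. \<forall>j. norm (c j) * r ^ j \<le> K"
proof -
  define d where "d j = norm (c j) * r ^ j" for j
  define A where "A = (\<Sum>k<m. norm (a k))"
  have A: "A \<ge> 0" unfolding A_def by (intro sum_nonneg) auto
  obtain N where N: "\<And>n. n \<ge> N \<Longrightarrow> wf \<alpha> n \<ge> r ^ m * A + 1"
    using wf_at_top[OF assms(1,2), of "r ^ m * A + 1"] unfolding eventually_sequentially by blast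
  define K where "K = Max (d ` {..<N + m})"
  have dK: "d j \<le> K" if "j < N + m" for j
    unfolding K_def using that by (intro Max_ge) auto
  have d0: "d j \<ge> 0" for j unfolding d_def using assms(5) by simp
  have K0: "K \<ge> 0" using dK[of 0] d0[of 0] assms(3) by simp
  have "d j \<le> K" for j
  proof (induction j rule: less_induct)
    case (less j)
    show ?case
    proof (cases "j < N + m")
      case True then show ?thesis by (rule dK)
    next
      case False
      define n where "n = j - m"
      have j: "j = n + m" and nN: "n \<ge> N" using False unfolding n_def by auto
      define W where "W = wf \<alpha> (n + (m - 1))"
      have WA: "W \<ge> r ^ m * A + 1" unfolding W_def using N nN by simp
      have W: "W > 0" using WA A assms(5) by (smt (verit) mult_nonneg_nonneg one_le_power)
      have b: "norm (c (n + m)) * W \<le> (\<Sum>k<m. norm (a k) * norm (c (n + k)))"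
        unfolding W_def using rec_bound[OF assms(1-3), of a c n] assms(4) by simp
      have "d j * W = (norm (c (n + m)) * W) * r ^ (n + m)"
        unfolding d_def j by (simp add: mult_ac)
      also have "\<dots> \<le> (\<Sum>k<m. norm (a k) * norm (c (n + k))) * r ^ (n + m)"
        using b assms(5) by (intro mult_right_mono) auto
      also have "\<dots> = (\<Sum>k<m. norm (a k) * (norm (c (n + k)) * r ^ (n + m)))"
        by (simp add: sum_distrib_right mult.assoc)
      also have "\<dots> \<le> (\<Sum>k<m. norm (a k) * (K * r ^ m))"
      proof (intro sum_mono mult_left_mono)
        fix k assume k: "k \<in> {..<m}"
        have "norm (c (n + k)) * r ^ (n + m) = d (n + k) * r ^ (m - k)"
          unfolding d_def using k by (simp add: power_add[symmetric] mult.assoc)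
        also have "\<dots> \<le> K * r ^ m"
        proof (rule mult_mono)
          show "d (n + k) \<le> K" using less k j by simp
          show "r ^ (m - k) \<le> r ^ m" using assms(5) by (intro power_increasing) auto
        qed (use K0 assms(5) in auto)
        finally show "norm (c (n + k)) * r ^ (n + m) \<le> K * r ^ m" .
      qed auto
      also have "\<dots> = (r ^ m * A) * K"
        unfolding A_def by (simp add: sum_distrib_left sum_distrib_right mult_ac)
      also have "\<dots> \<le> W * K"
        using WA K0 by (intro mult_right_mono) auto
      finally show ?thesis using W by (simp add: mult.commute)
    qed
  qed
  then show ?thesis unfolding d_def by blast
qed

lemma rec_entire:
  assumes "0 < \<alpha>" "\<alpha> < 1" "m \<ge> 1" "\<forall>n. RE \<alpha> m a c n = 0"
  shows "entire_ps c"
  unfolding entire_ps_def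
proof (intro allI impI)
  fix t :: real assume t: "t \<ge> 0"
  define r where "r = t + 1"
  obtain K where K: "\<And>j. norm (c j) * r ^ j \<le> K"
    using rec_growth[OF assms, of r] t unfolding r_def by auto
  have r: "r > 0" "norm (t / r) < 1" using t unfolding r_def by auto
  have "summable (\<lambda>n. K * (t / r) ^ n)"
    by (intro summable_mult summable_geometric r)
  then show "summable (\<lambda>n. c n * complex_of_real t ^ n)"
  proof (rule summable_comparison_test[rotated], intro exI allI impI)
    fix n :: nat
    have "norm (c n * complex_of_real t ^ n) = (norm (c n) * r ^ n) * (t / r) ^ n"
      using t r by (simp add: norm_mult norm_power power_divide)
    also have "\<dots> \<le> K * (t / r) ^ n"
      using K t r by (intro mult_right_mono) auto
    finally show "norm (c n * complex_of_real t ^ n) \<le> K * (t / r) ^ n" .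
  qed
qed


lemma entire_RE:
  assumes "0 < \<alpha>" "\<alpha> < 1" "entire_ps c"
  shows "entire_ps (RE \<alpha> m a c)"
  unfolding entire_ps_def
proof (intro allI impI)
  fix t :: real assume t: "t \<ge> 0"
  have s: "summable (\<lambda>n. (LD \<alpha> ^^ k) c n * complex_of_real t ^ n)" for k
    using entire_LD_pow[OF assms, of k] t unfolding entire_ps_def by blast
  have "summable (\<lambda>n. (LD \<alpha> ^^ m) c n * complex_of_real t ^ n + (\<Sum>k<m. a k * ((LD \<alpha> ^^ k) c n * complex_of_real t ^ n)))"
    by (intro summable_add summable_sum summable_mult s)
  moreover have "(LD \<alpha> ^^ m) c n * complex_of_real t ^ n + (\<Sum>k<m. a k * ((LD \<alpha> ^^ k) c n * complex_of_real t ^ n))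
      = RE \<alpha> m a c n * complex_of_real t ^ n" for n
    unfolding RE_def by (simp add: distrib_right sum_distrib_right mult.assoc)
  ultimately show "summable (\<lambda>n. RE \<alpha> m a c n * complex_of_real t ^ n)" by simp
qed

lemma ps_eval_zero_fun: "ps_eval (\<lambda>n. 0) t = 0"
  unfolding ps_eval_def by simp

lemma S_char:
  assumes "0 < \<alpha>" "\<alpha> < 1" "m \<ge> 1"
  shows "{c. entire_ps c \<and>
             (\<forall>t::real. t \<ge> 0 \<longrightarrow>
                ps_eval ((LD \<alpha> ^^ m) c) t + (\<Sum>k<m. a k * ps_eval ((LD \<alpha> ^^ k) c) t) = 0)}
       = {c. \<forall>n. RE \<alpha> m a c n = 0}" (is "?L = ?R")
proof (intro equalityI subsetI)
  fix c assume "c \<in> ?L"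
  then have e: "entire_ps c" and z: "\<forall>t\<ge>0. ps_eval (RE \<alpha> m a c) t = 0"
    using ps_eval_comb[OF assms(1,2)] by auto
  show "c \<in> ?R" using ps_zero[OF entire_RE[OF assms(1,2) e] z] by simp
next
  fix c assume "c \<in> ?R"
  then have r: "\<forall>n. RE \<alpha> m a c n = 0" by simp
  have e: "entire_ps c" by (rule rec_entire[OF assms r])
  have "RE \<alpha> m a c = (\<lambda>n. 0)" using r by auto
  then show "c \<in> ?L" using e ps_eval_comb[OF assms(1,2) e] ps_eval_zero_fun by auto
qed

lemma Phi_char:
  "(\<lambda>c k. if k < m then ps_eval ((LD \<alpha> ^^ k) c) 0 else 0)
     = (\<lambda>c k. if k < m then c k * of_real (Pw \<alpha> 0 k) else 0)"
proof (intro ext)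
  fix c :: "nat \<Rightarrow> complex" and k
  show "(if k < m then ps_eval ((LD \<alpha> ^^ k) c) 0 else 0) = (if k < m then c k * of_real (Pw \<alpha> 0 k) else 0)"
    unfolding ps_eval_0 LD_pow by simp
qed

lemma RE_add: "RE \<alpha> m a (c + d) n = RE \<alpha> m a c n + RE \<alpha> m a d n"
  unfolding RE_alt by (simp add: algebra_simps sum.distrib)

lemma RE_scale: "RE \<alpha> m a (cscale z c) n = z * RE \<alpha> m a c n"
  unfolding RE_alt cscale_def by (simp add: algebra_simps sum_distrib_left)

lemma RE_zero: "RE \<alpha> m a 0 n = 0"
  unfolding RE_alt by simp

lemma RE_uniq:
  assumes "0 < \<alpha>" "\<alpha> < 1" "\<forall>n. RE \<alpha> m a c n = 0" "\<forall>n. RE \<alpha> m a d n = 0"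
    "\<forall>k<m. c k = d k"
  shows "c j = d j"
proof (induction j rule: less_induct)
  case (less j)
  show ?case
  proof (cases "j < m")
    case True then show ?thesis using assms(5) by simp
  next
    case False
    define n where "n = j - m"
    have j: "j = n + m" using False unfolding n_def by auto
    have P: "complex_of_real (Pw \<alpha> n m) \<noteq> 0"
      using Pw_ge1[OF assms(1,2), of n m] by (simp add: of_real_eq_0_iff)
    have ih: "(\<Sum>k<m. a k * (c (n + k) * of_real (Pw \<alpha> n k))) = (\<Sum>k<m. a k * (d (n + k) * of_real (Pw \<alpha> n k)))"
      by (intro sum.cong refl) (use less j in auto)
    have e1: "c (n + m) * of_real (Pw \<alpha> n m) = - (\<Sum>k<m. a k * (c (n + k) * of_real (Pw \<alpha> n k)))"
      using assms(3) unfolding RE_alt by (simp add: eq_neg_iff_add_eq_0)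
    have e2: "d (n + m) * of_real (Pw \<alpha> n m) = - (\<Sum>k<m. a k * (d (n + k) * of_real (Pw \<alpha> n k)))"
      using assms(4) unfolding RE_alt by (simp add: eq_neg_iff_add_eq_0)
    have "c (n + m) * of_real (Pw \<alpha> n m) = d (n + m) * of_real (Pw \<alpha> n m)"
      unfolding e1 e2 ih ..
    then show ?thesis using P j by simp
  qed
qed

function solseq :: "real \<Rightarrow> nat \<Rightarrow> (nat \<Rightarrow> complex) \<Rightarrow> (nat \<Rightarrow> complex) \<Rightarrow> nat \<Rightarrow> complex" where
  "solseq \<alpha> m a v n = (if n < m then v n / of_real (Pw \<alpha> 0 n)
     else - (\<Sum>k<m. a k * (solseq \<alpha> m a v (n - m + k) * of_real (Pw \<alpha> (n - m) k))) / of_real (Pw \<alpha> (n - m) m))"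
  by auto
termination
  by (relation "Wellfounded.measure (\<lambda>(\<alpha>, m, a, v, n). n)") auto

declare solseq.simps[simp del]

lemma solseq_RE:
  assumes "0 < \<alpha>" "\<alpha> < 1"
  shows "RE \<alpha> m a (solseq \<alpha> m a v) n = 0"
proof -
  have P: "complex_of_real (Pw \<alpha> n m) \<noteq> 0"
    using Pw_ge1[OF assms(1,2), of n m] by (simp add: of_real_eq_0_iff)
  have "solseq \<alpha> m a v (n + m) = - (\<Sum>k<m. a k * (solseq \<alpha> m a v (n + k) * of_real (Pw \<alpha> n k))) / of_real (Pw \<alpha> n m)"
    by (subst solseq.simps) (simp add: add.commute)
  then show ?thesis unfolding RE_alt using P by simp
qed

lemma solseq_init:
  assumes "0 < \<alpha>" "\<alpha> < 1" "k < m"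
  shows "solseq \<alpha> m a v k * of_real (Pw \<alpha> 0 k) = v k"
proof -
  have P: "complex_of_real (Pw \<alpha> 0 k) \<noteq> 0"
    using Pw_ge1[OF assms(1,2), of 0 k] by (simp add: of_real_eq_0_iff)
  show ?thesis using assms(3) P by (subst solseq.simps) simp
qed


interpretation cs: vector_space cscale
  by unfold_locales (simp_all add: cscale_def fun_eq_iff algebra_simps)

lemma fun_sum_apply: "(sum f A) x = (\<Sum>i\<in>A. f i x)" for f :: "'i \<Rightarrow> nat \<Rightarrow> complex"
  by (induction A rule: infinite_finite_induct) auto

theorem mainTheorem16:
  fixes \<alpha> :: real and m :: nat and a :: "nat \<Rightarrow> complex"
  assumes "0 < \<alpha>" "\<alpha> < 1" "m \<ge> 1"
  defines "S \<equiv> {c. entire_ps c \<and>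
             (\<forall>t::real. t \<ge> 0 \<longrightarrow>
                ps_eval ((LD \<alpha> ^^ m) c) t + (\<Sum>k<m. a k * ps_eval ((LD \<alpha> ^^ k) c) t) = 0)}"
  defines "\<Phi> \<equiv> (\<lambda>c k. if k < m then ps_eval ((LD \<alpha> ^^ k) c) 0 else 0)"
  shows "module.subspace cscale S
       \<and> vector_space.dim cscale S = m
       \<and> Vector_Spaces.linear cscale cscale \<Phi>
       \<and> bij_betw \<Phi> S {v. \<forall>k\<ge>m. v k = 0}"
proof -
  have S_eq: "S = {c. \<forall>n. RE \<alpha> m a c n = 0}" unfolding S_def by (rule S_char[OF assms(1-3)])
  define P0 where "P0 k = complex_of_real (Pw \<alpha> 0 k)" for k
  have P0: "P0 k \<noteq> 0" for k
    unfolding P0_def using Pw_ge1[OF assms(1,2), of 0 k] by (simp add: of_real_eq_0_iff)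
  have Phi_eq: "\<Phi> = (\<lambda>c k. if k < m then c k * P0 k else 0)"
    unfolding \<Phi>_def P0_def by (rule Phi_char)
  have sub: "cs.subspace S"
    unfolding cs.subspace_def S_eq by (auto simp: RE_add RE_scale RE_zero)
  have lin: "Vector_Spaces.linear cscale cscale \<Phi>"
    unfolding Vector_Spaces.linear_iff Phi_eq using cs.vector_space_axioms
    by (auto simp: cscale_def fun_eq_iff algebra_simps)
  have uniq: "c = d" if "c \<in> S" "d \<in> S" "\<forall>k<m. c k = d k" for c d
  proof
    fix j show "c j = d j"
      by (rule RE_uniq[OF assms(1,2)]) (use that in \<open>auto simp: S_eq\<close>)
  qed
  have inj: "inj_on \<Phi> S"
  proof (rule inj_onI)
    fix c d assume cd: "c \<in> S" "d \<in> S" "\<Phi> c = \<Phi> d"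
    have "c k = d k" if "k < m" for k
      using fun_cong[OF cd(3), of k] that P0[of k] unfolding Phi_eq by simp
    then show "c = d" using uniq cd by blast
  qed
  have img: "\<Phi> ` S = {v. \<forall>k\<ge>m. v k = 0}"
  proof (intro equalityI subsetI)
    fix v assume "v \<in> \<Phi> ` S" then show "v \<in> {v. \<forall>k\<ge>m. v k = 0}"
      unfolding Phi_eq by auto
  next
    fix v :: "nat \<Rightarrow> complex" assume v: "v \<in> {v. \<forall>k\<ge>m. v k = 0}"
    have "solseq \<alpha> m a v \<in> S" unfolding S_eq using solseq_RE[OF assms(1,2)] by simp
    moreover have "\<Phi> (solseq \<alpha> m a v) = v"
      unfolding Phi_eq P0_def using v solseq_init[OF assms(1,2)] by (auto simp: fun_eq_iff)
    ultimately show "v \<in> \<Phi> ` S" by (metis image_eqI)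
  qed
  have bij: "bij_betw \<Phi> S {v. \<forall>k\<ge>m. v k = 0}"
    using inj img unfolding bij_betw_def by blast
  define \<delta> where "\<delta> i = (\<lambda>j::nat. if j = i then 1 else 0 :: complex)" for i
  define b where "b i = solseq \<alpha> m a (\<delta> i)" for i
  have bS: "b i \<in> S" for i unfolding S_eq b_def using solseq_RE[OF assms(1,2)] by simp
  have bval: "b i k = \<delta> i k / P0 k" if "k < m" for i k
    using solseq_init[OF assms(1,2) that, of a "\<delta> i"] P0[of k] unfolding b_def P0_def
    by (simp add: field_simps)
  have binj: "inj_on b {..<m}"
  proof (rule inj_onI)
    fix i j assume ij: "i \<in> {..<m}" "j \<in> {..<m}" "b i = b j"
    have "b i i = b j i" using ij by simp
    then have "\<delta> j i / P0 i = \<delta> i i / P0 i" using bval[of i i] bval[of i j] ij by (metis lessThan_iff)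
    then have "\<delta> j i = \<delta> i i" using P0[of i] by simp
    then show "i = j" unfolding \<delta>_def by (auto split: if_splits)
  qed
  define B where "B = b ` {..<m}"
  have BS: "B \<subseteq> S" unfolding B_def using bS by auto
  have spanS: "S \<subseteq> cs.span B"
  proof
    fix c assume c: "c \<in> S"
    define s where "s = (\<Sum>i<m. cscale (c i * P0 i) (b i))"
    have s_span: "s \<in> cs.span B" unfolding s_def B_def
      by (intro cs.span_sum cs.span_scale cs.span_base) auto
    have sS: "s \<in> S" using cs.span_minimal[OF BS sub] s_span by blast
    have "s k = c k" if k: "k < m" for k
    proof -
      have "s k = (\<Sum>i<m. c i * P0 i * (\<delta> i k / P0 k))"
        unfolding s_def fun_sum_apply cscale_def using bval k by simp
      also have "\<dots> = (\<Sum>i<m. if i = k then c k else 0)"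
        by (intro sum.cong refl) (use P0[of k] in \<open>auto simp: \<delta>_def\<close>)
      also have "\<dots> = c k" using k by simp
      finally show ?thesis .
    qed
    then have "c = s" using uniq[OF c sS] by simp
    then show "c \<in> cs.span B" using s_span by simp
  qed
  have indep: "cs.independent B"
  proof (rule cs.independent_if_scalars_zero)
    show "finite B" unfolding B_def by simp
  next
    fix u v assume u: "(\<Sum>v\<in>B. cscale (u v) v) = 0" and v: "v \<in> B"
    then obtain k where k: "k < m" "v = b k" unfolding B_def by auto
    have "(\<Sum>i<m. cscale (u (b i)) (b i)) = 0"
      using u unfolding B_def by (simp add: sum.reindex[OF binj])
    then have "(\<Sum>i<m. cscale (u (b i)) (b i)) k = 0" by simp
    then have "(\<Sum>i<m. u (b i) * (\<delta> i k / P0 k)) = 0"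
      unfolding fun_sum_apply cscale_def using bval k by simp
    moreover have "(\<Sum>i<m. u (b i) * (\<delta> i k / P0 k)) = (\<Sum>i<m. if i = k then u (b k) / P0 k else 0)"
      by (intro sum.cong refl) (auto simp: \<delta>_def)
    ultimately have "u (b k) / P0 k = 0" using k by simp
    then show "u v = 0" using P0[of k] k by simp
  qed
  have card: "card B = m" unfolding B_def using card_image[OF binj] by simp
  have dim: "cs.dim S = m"
    by (rule cs.dim_unique[OF BS spanS indep card])
  show ?thesis using sub dim lin bij by blast
qed

end
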